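(* For a complex double sequence $\{a_{kl}\}_{k,l\ge1}$ and integers $m,n\ge0$ let $Q_{m,n}:=[2^m,2^{m+1}]\times[2^n,2^{n+1}]$ and $A_{mn}:=\max_{(k,l)\in Q_{m,n}\cap\mathbb{N}^2}|a_{kl}|$. Let $T>0$. (a) For any sequence $\{a_{kl}\}\in GM^c_1$ with constant $C$, there exist $c,v>0$, depending only on $C$ and $T$, such that for every $(m,n)$, $m,n\ge1$, with $A_{m-1,n-1}\le T A_{mn}$, there exists a rectangle $Q'_{m-1,n-1}\subset Q_{m-1,n-1}$ of size $2^{m-v}\times2^{n-v}$ satisfying $$\Big|\sum_{(k,l)\in Q'_{m-1,n-1}\cap\mathbb{N}^2}a_{kl}\Big|>c\,2^{m+n}A_{mn}.$$ (b) For any sequence $\{a_{kl}\}\in GM^c_2$ with constant $C$, there exist $c,v>0$, depending only on $C$ and $T$, such that for every $(m,n)$, $m\ge0$, $n\ge1$, with $A_{m+1,n-1}\le T A_{mn}$, there exists a rectangle $Q'_{m+1,n-1}\subset Q_{m+1,n-1}$ of size $2^{m-v}\times2^{n-v}$ satisfying $$\Big|\sum_{(k,l)\in Q'_{m+1,n-1}\cap\mathbb{N}^2}a_{kl}\Big|>c\,2^{m+n}A_{mn}.$$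
   Context: $\Delta^{11}a_{mn}:=a_{mn}-a_{m+1,n}-a_{m,n+1}+a_{m+1,n+1}$. A double sequence $\{a_{mn}\}_{m,n\ge1}$ belongs to $GM^c_1$ (with constant $C$) if $a_{mn}\to0$ as $m+n\to\infty$ and for all $k,l\in\mathbb{N}$, $$\sum_{m=k}^{2k}\sum_{n=l}^{\infty}|\Delta^{11}a_{mn}|+\sum_{m=k}^{\infty}\sum_{n=l}^{2l}|\Delta^{11}a_{mn}|\le C|a_{kl}|;$$ it belongs to $GM^c_2$ (with constant $C$) if $a_{mn}\to0$ as $m+n\to\infty$ and for all $k,l$ the same left-hand side is $\le C|a_{2k,l}|$. A rectangle of size $\alpha\times\beta$ means a set $[s_1,s_1+\alpha]\times[t_1,t_1+\beta]$. *)

theory Defs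
  imports "HOL-Analysis.Analysis"
begin

text \<open>Double sequences are functions nat => nat => complex; only indices >= 1 are used.\<close>

definition Delta11 :: "(nat \<Rightarrow> nat \<Rightarrow> complex) \<Rightarrow> nat \<Rightarrow> nat \<Rightarrow> complex" where
  "Delta11 a m n = a m n - a (Suc m) n - a m (Suc n) + a (Suc m) (Suc n)"

definition tends_to_zero2 :: "(nat \<Rightarrow> nat \<Rightarrow> complex) \<Rightarrow> bool" where
  "tends_to_zero2 a \<longleftrightarrow>
     (\<forall>\<epsilon>>0. \<exists>N. \<forall>m n. 1 \<le> m \<longrightarrow> 1 \<le> n \<longrightarrow> N \<le> m + n \<longrightarrow> norm (a m n) < \<epsilon>)"

definition GM_lhs :: "(nat \<Rightarrow> nat \<Rightarrow> complex) \<Rightarrow> nat \<Rightarrow> nat \<Rightarrow> ennreal" where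
  "GM_lhs a k l =
     (\<Sum>m\<in>{k..2*k}. (\<Sum>j. ennreal (norm (Delta11 a m (l + j)))))
   + (\<Sum>i. (\<Sum>n\<in>{l..2*l}. ennreal (norm (Delta11 a (k + i) n))))"

definition GMc1 :: "real \<Rightarrow> (nat \<Rightarrow> nat \<Rightarrow> complex) \<Rightarrow> bool" where
  "GMc1 C a \<longleftrightarrow> tends_to_zero2 a \<and>
     (\<forall>k l. 1 \<le> k \<longrightarrow> 1 \<le> l \<longrightarrow> GM_lhs a k l \<le> ennreal (C * norm (a k l)))"

definition GMc2 :: "real \<Rightarrow> (nat \<Rightarrow> nat \<Rightarrow> complex) \<Rightarrow> bool" where
  "GMc2 C a \<longleftrightarrow> tends_to_zero2 a \<and>
     (\<forall>k l. 1 \<le> k \<longrightarrow> 1 \<le> l \<longrightarrow> GM_lhs a k l \<le> ennreal (C * norm (a (2*k) l)))"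

definition Amax :: "(nat \<Rightarrow> nat \<Rightarrow> complex) \<Rightarrow> nat \<Rightarrow> nat \<Rightarrow> real" where
  "Amax a m n = Max {norm (a k l) | k l. 2^m \<le> k \<and> k \<le> 2^(Suc m) \<and> 2^n \<le> l \<and> l \<le> 2^(Suc n)}"

definition rect_sum :: "(nat \<Rightarrow> nat \<Rightarrow> complex) \<Rightarrow> real \<Rightarrow> real \<Rightarrow> real \<Rightarrow> real \<Rightarrow> complex" where
  "rect_sum a s1 t1 \<alpha> \<beta> =
     (\<Sum>(k,l)\<in>{(k,l). 1 \<le> k \<and> 1 \<le> l \<and> s1 \<le> real k \<and> real k \<le> s1 + \<alpha>
                          \<and> t1 \<le> real l \<and> real l \<le> t1 + \<beta>}. a k l)"

definition rect_in_Q :: "real \<Rightarrow> real \<Rightarrow> real \<Rightarrow> real \<Rightarrow> nat \<Rightarrow> nat \<Rightarrow> bool" where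
  "rect_in_Q s1 t1 \<alpha> \<beta> m n \<longleftrightarrow>
     {s1..s1+\<alpha>} \<times> {t1..t1+\<beta>} \<subseteq> {2^m..2^(Suc m)} \<times> {2^n..2^(Suc n)}"

end

theory Submission
  imports Defs
begin
definition FF :: "(nat \<Rightarrow> nat \<Rightarrow> complex) \<Rightarrow> nat \<Rightarrow> nat \<Rightarrow> ennreal" where
  "FF a N i = (\<Sum>j. ennreal (norm (Delta11 a i (N + j))))"
definition GG :: "(nat \<Rightarrow> nat \<Rightarrow> complex) \<Rightarrow> nat \<Rightarrow> nat \<Rightarrow> ennreal" where
  "GG a K j = (\<Sum>i. ennreal (norm (Delta11 a (K + i) j)))"

lemma sum_shift_le_suminf:
  fixes h :: "nat \<Rightarrow> ennreal"
  assumes "N \<le> t"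
  shows "(\<Sum>j<J. h (t + j)) \<le> (\<Sum>j. h (N + j))"
proof -
  have "(\<Sum>j<J. h (t + j)) = (\<Sum>j\<in>{t-N..<t-N+J}. h (N + j))"
  proof (rule sum.reindex_bij_witness[where i="\<lambda>j. j - (t-N)" and j="\<lambda>j. j + (t - N)"])
  qed (use assms in \<open>auto simp: add.commute\<close>)
  also have "\<dots> \<le> (\<Sum>j. h (N + j))"
    by (rule sum_le_suminf[OF summableI]) auto
  finally show ?thesis .
qed

lemma tele_j:
  "a i t - a (Suc i) t - (a i (t+J) - a (Suc i) (t+J)) = (\<Sum>j<J. Delta11 a i (t + j))"
  by (induction J) (auto simp: Delta11_def algebra_simps)

lemma tele_i:
  "a k j - a k (Suc j) - (a (k+I) j - a (k+I) (Suc j)) = (\<Sum>i<I. Delta11 a (k + i) j)"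
  by (induction I) (auto simp: Delta11_def algebra_simps)

lemma D1:
  assumes tz: "tends_to_zero2 a" and "1 \<le> i" "N \<le> t" "1 \<le> t"
  shows "ennreal (norm (a i t - a (Suc i) t)) \<le> FF a N i"
  unfolding FF_def
proof (rule ennreal_le_epsilon)
  fix e :: real assume e: "0 < e"
  obtain M where M: "\<And>m n. 1 \<le> m \<Longrightarrow> 1 \<le> n \<Longrightarrow> M \<le> m + n \<Longrightarrow> norm (a m n) < e/2"
    using tz e unfolding tends_to_zero2_def by (meson half_gt_zero)
  let ?J = M
  have b1: "norm (a i (t+?J)) < e/2" using M assms by auto
  have b2: "norm (a (Suc i) (t+?J)) < e/2" using M assms by auto
  have eqJ: "a i t - a (Suc i) t = (\<Sum>j<?J. Delta11 a i (t + j)) + (a i (t+?J) - a (Suc i) (t+?J))"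
    using tele_j[of a i t ?J] by (simp add: algebra_simps)
  hence "norm (a i t - a (Suc i) t) \<le> (\<Sum>j<?J. norm (Delta11 a i (t + j))) + (norm (a i (t+?J)) + norm (a (Suc i) (t+?J)))"
  proof -
    have "norm ((\<Sum>j<?J. Delta11 a i (t + j)) + (a i (t+?J) - a (Suc i) (t+?J))) \<le> norm (\<Sum>j<?J. Delta11 a i (t + j)) + norm (a i (t+?J) - a (Suc i) (t+?J))"
      by (rule norm_triangle_ineq)
    moreover have "norm (\<Sum>j<?J. Delta11 a i (t + j)) \<le> (\<Sum>j<?J. norm (Delta11 a i (t + j)))"
      by (rule norm_sum)
    moreover have "norm (a i (t+?J) - a (Suc i) (t+?J)) \<le> norm (a i (t+?J)) + norm (a (Suc i) (t+?J))"
      by (rule norm_triangle_ineq4)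
    ultimately show ?thesis unfolding eqJ by linarith
  qed
  also have "\<dots> \<le> (\<Sum>j<?J. norm (Delta11 a i (t + j))) + e"
    using b1 b2 by linarith
  finally have "ennreal (norm (a i t - a (Suc i) t)) \<le> ennreal ((\<Sum>j<?J. norm (Delta11 a i (t + j))) + e)"
    by (rule ennreal_leI)
  also have "\<dots> = (\<Sum>j<?J. ennreal (norm (Delta11 a i (t + j)))) + ennreal e"
    using e by (simp add: ennreal_plus sum_nonneg sum_ennreal)
  also have "\<dots> \<le> (\<Sum>j. ennreal (norm (Delta11 a i (N + j)))) + ennreal e"
    by (rule add_right_mono[OF sum_shift_le_suminf[OF assms(3), where h="\<lambda>j. ennreal (norm (Delta11 a i j))"]])
  finally show "ennreal (norm (a i t - a (Suc i) t)) \<le> (\<Sum>j. ennreal (norm (Delta11 a i (N + j)))) + ennreal e" .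
qed

lemma D2:
  assumes tz: "tends_to_zero2 a" and "1 \<le> j" "K \<le> k" "1 \<le> k"
  shows "ennreal (norm (a k j - a k (Suc j))) \<le> GG a K j"
  unfolding GG_def
proof (rule ennreal_le_epsilon)
  fix e :: real assume e: "0 < e"
  obtain M where M: "\<And>m n. 1 \<le> m \<Longrightarrow> 1 \<le> n \<Longrightarrow> M \<le> m + n \<Longrightarrow> norm (a m n) < e/2"
    using tz e unfolding tends_to_zero2_def by (meson half_gt_zero)
  let ?J = M
  have b1: "norm (a (k+?J) j) < e/2" using M assms by auto
  have b2: "norm (a (k+?J) (Suc j)) < e/2" using M assms by auto
  have eqJ: "a k j - a k (Suc j) = (\<Sum>i<?J. Delta11 a (k+i) j) + (a (k+?J) j - a (k+?J) (Suc j))"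
    using tele_i[of a k j ?J] by (simp add: algebra_simps)
  hence "norm (a k j - a k (Suc j)) \<le> (\<Sum>i<?J. norm (Delta11 a (k+i) j)) + (norm (a (k+?J) j) + norm (a (k+?J) (Suc j)))"
  proof -
    have "norm ((\<Sum>i<?J. Delta11 a (k+i) j) + (a (k+?J) j - a (k+?J) (Suc j))) \<le> norm (\<Sum>i<?J. Delta11 a (k+i) j) + norm (a (k+?J) j - a (k+?J) (Suc j))"
      by (rule norm_triangle_ineq)
    moreover have "norm (\<Sum>i<?J. Delta11 a (k+i) j) \<le> (\<Sum>i<?J. norm (Delta11 a (k+i) j))"
      by (rule norm_sum)
    moreover have "norm (a (k+?J) j - a (k+?J) (Suc j)) \<le> norm (a (k+?J) j) + norm (a (k+?J) (Suc j))"
      by (rule norm_triangle_ineq4)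
    ultimately show ?thesis unfolding eqJ by linarith
  qed
  also have "\<dots> \<le> (\<Sum>i<?J. norm (Delta11 a (k+i) j)) + e"
    using b1 b2 by linarith
  finally have "ennreal (norm (a k j - a k (Suc j))) \<le> ennreal ((\<Sum>i<?J. norm (Delta11 a (k+i) j)) + e)"
    by (rule ennreal_leI)
  also have "\<dots> = (\<Sum>i<?J. ennreal (norm (Delta11 a (k+i) j))) + ennreal e"
    using e by (simp add: ennreal_plus sum_nonneg sum_ennreal)
  also have "\<dots> \<le> (\<Sum>i. ennreal (norm (Delta11 a (K+i) j))) + ennreal e"
    by (rule add_right_mono[OF sum_shift_le_suminf[OF assms(3), where h="\<lambda>i. ennreal (norm (Delta11 a i j))"]])
  finally show "ennreal (norm (a k j - a k (Suc j))) \<le> (\<Sum>i. ennreal (norm (Delta11 a (K+i) j))) + ennreal e" .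
qed

lemma tele_norm_enn:
  fixes f :: "nat \<Rightarrow> complex"
  assumes "k \<le> k'"
  shows "ennreal (norm (f k - f k')) \<le> (\<Sum>i\<in>{k..<k'}. ennreal (norm (f i - f (Suc i))))"
proof -
  have h: "(\<Sum>i\<in>{k..<k'}. f i - f (Suc i)) = - (\<Sum>i\<in>{k..<k'}. f (Suc i) - f i)"
    by (simp flip: sum_negf)
  have "f k - f k' = (\<Sum>i\<in>{k..<k'}. f i - f (Suc i))"
    unfolding h using sum_Suc_diff'[OF assms, of f] by simp
  hence "norm (f k - f k') \<le> (\<Sum>i\<in>{k..<k'}. norm (f i - f (Suc i)))"
    by (simp add: norm_sum)
  hence "ennreal (norm (f k - f k')) \<le> ennreal (\<Sum>i\<in>{k..<k'}. norm (f i - f (Suc i)))"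
    by (rule ennreal_leI)
  thus ?thesis by (simp add: sum_ennreal)
qed

lemma VAR:
  assumes tz: "tends_to_zero2 a" and "1 \<le> K" "K \<le> k" "k \<le> k'" "1 \<le> N" "N \<le> l" "l \<le> l'"
  shows "ennreal (norm (a k l - a k' l')) \<le> (\<Sum>i\<in>{k..<k'}. FF a N i) + (\<Sum>j\<in>{l..<l'}. GG a K j)"
proof -
  have "norm (a k l - a k' l') \<le> norm (a k l - a k' l) + norm (a k' l - a k' l')"
    by (metis norm_triangle_ineq diff_add_cancel add_diff_eq)
  hence "ennreal (norm (a k l - a k' l')) \<le> ennreal (norm (a k l - a k' l)) + ennreal (norm (a k' l - a k' l'))"
    by (metis ennreal_leI ennreal_plus norm_ge_zero)
  also have "ennreal (norm (a k l - a k' l)) \<le> (\<Sum>i\<in>{k..<k'}. ennreal (norm (a i l - a (Suc i) l)))"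
    using tele_norm_enn[OF assms(4), of "\<lambda>i. a i l"] by simp
  also have "\<dots> \<le> (\<Sum>i\<in>{k..<k'}. FF a N i)"
    by (rule sum_mono, rule D1) (use assms in auto)
  also have "ennreal (norm (a k' l - a k' l')) \<le> (\<Sum>j\<in>{l..<l'}. ennreal (norm (a k' j - a k' (Suc j))))"
    using tele_norm_enn[OF assms(7), of "\<lambda>j. a k' j"] by simp
  also have "\<dots> \<le> (\<Sum>j\<in>{l..<l'}. GG a K j)"
    by (rule sum_mono, rule D2) (use assms in auto)
  finally show ?thesis by simp
qed

lemma GMsplit:
  "GM_lhs a k l = (\<Sum>i\<in>{k..2*k}. FF a l i) + (\<Sum>j\<in>{l..2*l}. GG a k j)"
  unfolding GM_lhs_def FF_def GG_def
  by (subst suminf_sum[OF summableI]) (rule refl)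

lemma LB:
  assumes tz: "tends_to_zero2 a" and g: "GM_lhs a k l \<le> ennreal r" and "r \<ge> 0"
    and "1 \<le> k" "1 \<le> l" "k \<le> k'" "k' \<le> 2*k" "l \<le> l'" "l' \<le> 2*l"
  shows "norm (a k l - a k' l') \<le> r"
proof -
  have "ennreal (norm (a k l - a k' l')) \<le> (\<Sum>i\<in>{k..<k'}. FF a l i) + (\<Sum>j\<in>{l..<l'}. GG a k j)"
    by (rule VAR) (use assms in auto)
  also have "\<dots> \<le> (\<Sum>i\<in>{k..2*k}. FF a l i) + (\<Sum>j\<in>{l..2*l}. GG a k j)"
    by (intro add_mono sum_mono2) (use assms in auto)
  also have "\<dots> \<le> ennreal r" using g by (simp add: GMsplit)
  finally show ?thesis using assms by (simp add: ennreal_le_iff)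
qed

lemma Amax_ge:
  assumes "2^m \<le> k" "k \<le> 2^Suc m" "2^n \<le> l" "l \<le> 2^Suc n"
  shows "norm (a k l) \<le> Amax a m n"
proof -
  have eq: "{norm (a k l) | k l. 2^m \<le> k \<and> k \<le> 2^(Suc m) \<and> 2^n \<le> l \<and> l \<le> 2^(Suc n)}
     = (\<lambda>(k,l). norm (a k l)) ` ({2^m..2^Suc m} \<times> {2^n..2^Suc n})"
    by (rule set_eqI) (simp add: image_iff Bex_def, blast)
  show ?thesis unfolding Amax_def eq
    by (rule Max_ge) (use assms in auto)
qed

lemma Amax_att:
  "\<exists>k l. 2^m \<le> k \<and> k \<le> 2^Suc m \<and> 2^n \<le> l \<and> l \<le> 2^Suc n \<and> norm (a k l) = Amax a m n"
proof -
  have eq: "{norm (a k l) | k l. 2^m \<le> k \<and> k \<le> 2^(Suc m) \<and> 2^n \<le> l \<and> l \<le> 2^(Suc n)}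
     = (\<lambda>(k,l). norm (a k l)) ` ({2^m..2^Suc m} \<times> {2^n..2^Suc n})"
    by (rule set_eqI) (simp add: image_iff Bex_def, blast)
  have "Amax a m n \<in> (\<lambda>(k,l). norm (a k l)) ` ({2^m..2^Suc m} \<times> {2^n..2^Suc n})"
    unfolding Amax_def eq by (rule Max_in) auto
  thus ?thesis by force
qed

lemma blocks_sum:
  fixes f :: "nat \<Rightarrow> ennreal"
  shows "(\<Sum>r<q. \<Sum>i\<in>{X+r*W..<X+r*W+W}. f i) = (\<Sum>i\<in>{X..<X+q*W}. f i)"
proof (induction q)
  case 0 then show ?case by simp
next
  case (Suc q)
  have eqX: "X + Suc q * W = X+q*W+W" by simp
  show ?case unfolding eqX sum.lessThan_Suc Suc.IH
    by (rule sum.atLeastLessThan_concat[OF le_add1 le_add1])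
qed

lemma div_enn:
  fixes x :: ennreal
  assumes "of_nat p * x \<le> ennreal B" "p > 0" "B \<ge> 0"
  shows "x \<le> ennreal (B / p)"
proof (cases x rule: ennreal_cases)
  case (real y)
  have "of_nat p * x = ennreal (real p * y)"
    using real by (simp add: ennreal_of_nat_eq_real_of_nat ennreal_mult'')
  hence "real p * y \<le> B" using assms(1,3) by simp
  hence "y \<le> B / p" using assms(2) by (simp add: pos_le_divide_eq mult.commute)
  thus ?thesis using real by (simp add: ennreal_leI)
next
  case top
  hence "of_nat p * x = top" using assms(2) by (simp add: ennreal_mult_top)
  thus ?thesis using assms(1) by (simp add: top_unique)
qed

lemma pick1:
  fixes f :: "nat \<Rightarrow> ennreal" and B :: real
  assumes w: "1 \<le> w" and B: "B \<ge> 0" and hs: "(\<Sum>i\<in>{2^e..<2^Suc e}. f i) \<le> ennreal B"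
  shows "\<exists>s::nat. 2^e \<le> s \<and> real s + 2 powr (real e - real w) \<le> 2^Suc e \<and> (e < w \<longrightarrow> s = 2^e)
     \<and> (\<forall>k::nat. s \<le> k \<longrightarrow> real k \<le> real s + 2 powr (real e - real w) \<longrightarrow> (\<Sum>i\<in>{s..<k}. f i) \<le> ennreal (B / 2^w))"
proof (cases "e < w")
  case True
  have "2 powr (real e - real w) \<le> 2 powr (-1)"
    using True by (intro powr_mono) auto
  hence al: "2 powr (real e - real w) < 1" by simp
  have one: "(1::real) \<le> 2^e" by simp
  have c2: "real ((2::nat)^e) + 2 powr (real e - real w) \<le> 2^Suc e"
  proof -
    have "real ((2::nat)^e) = 2^e" by simp
    moreover have "(2::real)^Suc e = 2 * 2^e" by simp
    ultimately show ?thesis using al one by linarith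
  qed
  have c4: "(\<Sum>i\<in>{2^e..<k}. f i) \<le> ennreal (B / 2^w)"
    if k: "2^e \<le> k" "real k \<le> real ((2::nat)^e) + 2 powr (real e - real w)" for k :: nat
  proof -
    have "real k < real ((2::nat)^e) + 1" using k(2) al by linarith
    hence "k < 2^e + 1" by (metis of_nat_1 of_nat_add of_nat_less_iff)
    hence "k = 2^e" using k(1) by linarith
    thus ?thesis by simp
  qed
  show ?thesis
    by (rule exI[of _ "2^e"]) (use c2 c4 in blast)
next
  case False
  define W :: nat where "W = 2^(e-w)"
  define p :: nat where "p = 2^w"
  have pW: "p * W = 2^e" unfolding p_def W_def using False by (simp flip: power_add)
  have al: "2 powr (real e - real w) = real W"
    unfolding W_def using False by (simp add: powr_realpow[symmetric] of_nat_diff)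
  define g where "g r = (\<Sum>i\<in>{2^e+r*W..<2^e+r*W+W}. f i)" for r
  have p0: "p > 0" unfolding p_def by simp
  have "Min (g ` {..<p}) \<in> g ` {..<p}"
    by (rule Min_in) (use p0 in auto)
  then obtain r where r: "r < p" "g r = Min (g ` {..<p})"
    by (metis imageE lessThan_iff)
  have rmin: "g r \<le> g r'" if "r' < p" for r'
    using r(2) that by simp
  have "of_nat p * g r = (\<Sum>r'<p. g r)" by simp
  also have "\<dots> \<le> (\<Sum>r'<p. g r')" by (rule sum_mono) (use rmin in auto)
  also have "\<dots> = (\<Sum>i\<in>{2^e..<2^e+p*W}. f i)" unfolding g_def by (rule blocks_sum)
  also have "\<dots> \<le> ennreal B" using hs pW by (simp add: mult_2)
  finally have gr: "g r \<le> ennreal (B / p)" by (rule div_enn) (use p0 B in auto)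
  define s where "s = 2^e + r*W"
  have "Suc r * W \<le> p * W" using r(1) by (intro mult_right_mono) auto
  hence sW: "s + W \<le> 2^Suc e" unfolding s_def using pW by simp
  show ?thesis
  proof (intro exI[of _ s] conjI allI impI)
    show "2^e \<le> s" unfolding s_def by simp
    have "real (s + W) \<le> real ((2::nat)^Suc e)" using sW by (simp only: of_nat_le_iff)
    thus "real s + 2 powr (real e - real w) \<le> 2^Suc e" unfolding al by simp
    show "s = 2^e" if "e < w" using that False by simp
    fix k :: nat assume k: "s \<le> k" "real k \<le> real s + 2 powr (real e - real w)"
    hence "real k \<le> real (s + W)" unfolding al by simp
    hence "k \<le> s + W" by (simp only: of_nat_le_iff)
    hence "(\<Sum>i\<in>{s..<k}. f i) \<le> g r" unfolding g_def s_def
      by (intro sum_mono2) auto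
    also have "\<dots> \<le> ennreal (B / 2^w)" using gr unfolding p_def by simp
    finally show "(\<Sum>i\<in>{s..<k}. f i) \<le> ennreal (B / 2^w)" .
  qed
qed

lemma sumlow:
  fixes g :: "'b \<Rightarrow> complex"
  assumes "finite S" "\<And>p. p \<in> S \<Longrightarrow> norm (g p - x0) \<le> d"
  shows "real (card S) * (norm x0 - d) \<le> norm (\<Sum>p\<in>S. g p)"
proof -
  have eq: "(\<Sum>p\<in>S. g p) = of_nat (card S) * x0 + (\<Sum>p\<in>S. g p - x0)"
    by (simp add: sum_subtractf)
  have "norm (\<Sum>p\<in>S. g p - x0) \<le> (\<Sum>p\<in>S. norm (g p - x0))" by (rule norm_sum)
  also have "\<dots> \<le> (\<Sum>p\<in>S. d)" by (rule sum_mono) (use assms in auto)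
  finally have h: "norm (\<Sum>p\<in>S. g p - x0) \<le> real (card S) * d" by simp
  have "norm (of_nat (card S) * x0) \<le> norm (\<Sum>p\<in>S. g p) + norm (\<Sum>p\<in>S. g p - x0)"
    unfolding eq by (metis add_diff_cancel_left' norm_triangle_ineq4 add.commute le_diff_eq)
  moreover have "norm (of_nat (card S) * x0 :: complex) = real (card S) * norm x0"
    by (simp add: norm_mult)
  ultimately show ?thesis using h by (simp add: algebra_simps)
qed

lemma floor_iff:
  fixes s k :: nat and \<alpha> :: real
  assumes "\<alpha> \<ge> 0"
  shows "(real s \<le> real k \<and> real k \<le> real s + \<alpha>) \<longleftrightarrow> k \<in> {s..s + nat \<lfloor>\<alpha>\<rfloor>}"
proof -
  have "(real k \<le> real s + \<alpha>) \<longleftrightarrow> (int k - int s \<le> \<lfloor>\<alpha>\<rfloor>)"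
    by (simp add: le_floor_iff algebra_simps)
  thus ?thesis using assms by auto
qed

lemma floor_card:
  fixes \<alpha> :: real assumes "\<alpha> \<ge> 0"
  shows "\<alpha> \<le> real (Suc (nat \<lfloor>\<alpha>\<rfloor>))"
  using assms by linarith

lemma rect_core:
  fixes a :: "nat \<Rightarrow> nat \<Rightarrow> complex" and e e' w w' :: nat and B lam \<alpha> \<beta> :: real and ev :: bool
  assumes tz: "tends_to_zero2 a" and w: "1 \<le> w" "1 \<le> w'" and B: "B \<ge> 0"
   and al: "\<alpha> = 2 powr (real e - real w)" and be: "\<beta> = 2 powr (real e' - real w')"
   and hF: "(\<Sum>i\<in>{2^e..<2^Suc e}. FF a (2^e') i) \<le> ennreal B"
   and hG: "(\<Sum>j\<in>{2^e'..<2^Suc e'}. GG a (2^e) j) \<le> ennreal B"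
   and lam: "lam > 0" and hv: "2 * (B/2^w + B/2^w') \<le> lam/2"
   and hlow: "\<And>k l. 2^e \<le> k \<Longrightarrow> k \<le> 2^Suc e \<Longrightarrow> 2^e' \<le> l \<Longrightarrow> l \<le> 2^Suc e' \<Longrightarrow> (ev \<longrightarrow> even k) \<Longrightarrow> lam \<le> norm (a k l)"
   and ev: "ev \<longrightarrow> 1 \<le> e"
  shows "\<exists>s1 t1. rect_in_Q s1 t1 \<alpha> \<beta> e e' \<and> \<alpha>*\<beta>*lam/2 \<le> norm (rect_sum a s1 t1 \<alpha> \<beta>)"
proof -
  obtain s where s: "2^e \<le> s" "real s + \<alpha> \<le> 2^Suc e" "e < w \<longrightarrow> s = 2^e"
     "\<And>k::nat. s \<le> k \<Longrightarrow> real k \<le> real s + \<alpha> \<Longrightarrow> (\<Sum>i\<in>{s..<k}. FF a (2^e') i) \<le> ennreal (B/2^w)"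
    using pick1[OF w(1) B hF] unfolding al by blast
  obtain t where t: "2^e' \<le> t" "real t + \<beta> \<le> 2^Suc e'"
     "\<And>l::nat. t \<le> l \<Longrightarrow> real l \<le> real t + \<beta> \<Longrightarrow> (\<Sum>j\<in>{t..<l}. GG a (2^e) j) \<le> ennreal (B/2^w')"
    using pick1[OF w(2) B hG] unfolding be by blast
  have a0: "\<alpha> \<ge> 0" "\<beta> \<ge> 0" using al be by auto
  define W where "W = nat \<lfloor>\<alpha>\<rfloor>"
  define H where "H = nat \<lfloor>\<beta>\<rfloor>"
  define S where "S = {(k,l). 1 \<le> k \<and> 1 \<le> l \<and> real s \<le> real k \<and> real k \<le> real s + \<alpha> \<and> real t \<le> real l \<and> real l \<le> real t + \<beta>}"
  have "(1::nat) \<le> 2^e" by simp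
  hence s1: "1 \<le> s" using s(1) by linarith
  have "(1::nat) \<le> 2^e'" by simp
  hence t1: "1 \<le> t" using t(1) by linarith
  have SE: "S = {s..s+W} \<times> {t..t+H}"
  proof (rule set_eqI)
    fix p :: "nat \<times> nat"
    obtain k l where p: "p = (k,l)" by force
    show "p \<in> S \<longleftrightarrow> p \<in> {s..s+W} \<times> {t..t+H}"
      using floor_iff[OF a0(1), of s k] floor_iff[OF a0(2), of t l] s1 t1
      unfolding S_def W_def H_def p by auto
  qed
  have finS: "finite S" by (simp add: SE)
  have cardS: "card S = Suc W * Suc H" by (simp add: SE card_cartesian_product)
  have Wle: "real W \<le> \<alpha>" unfolding W_def using a0 by linarith
  have Hle: "real H \<le> \<beta>" unfolding H_def using a0 by linarith
  define s0 where "s0 = (if ev \<and> odd s then Suc s else s)"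
  have s0: "s \<le> s0" "s0 \<le> s + W" "ev \<longrightarrow> even s0"
  proof -
    show "s \<le> s0" unfolding s0_def by simp
    show "ev \<longrightarrow> even s0" unfolding s0_def by auto
    show "s0 \<le> s + W"
    proof (cases "ev \<and> odd s")
      case True
      have "\<not> e < w"
      proof
        assume "e < w"
        hence "s = 2^e" using s(3) by simp
        moreover have "1 \<le> e" using True ev by simp
        ultimately have "even s" by (simp add: Suc_le_eq)
        thus False using True by simp
      qed
      hence "1 \<le> \<alpha>" unfolding al by (intro ge_one_powr_ge_zero) auto
      hence "1 \<le> W" unfolding W_def by linarith
      thus ?thesis unfolding s0_def using True by simp
    next
      case False
      thus ?thesis unfolding s0_def by auto
    qed
  qed
  have var: "norm (a k l - a s t) \<le> B/2^w + B/2^w'" if kl: "(k,l) \<in> S" for k l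
  proof -
    have kl': "s \<le> k" "real k \<le> real s + \<alpha>" "t \<le> l" "real l \<le> real t + \<beta>"
      using kl unfolding S_def by auto
    have "ennreal (norm (a s t - a k l)) \<le> (\<Sum>i\<in>{s..<k}. FF a (2^e') i) + (\<Sum>j\<in>{t..<l}. GG a (2^e) j)"
      by (rule VAR[OF tz]) (use s(1) t(1) kl' in auto)
    also have "\<dots> \<le> ennreal (B/2^w) + ennreal (B/2^w')"
      by (intro add_mono s(4) t(3)) (use kl' in auto)
    also have "\<dots> = ennreal (B/2^w + B/2^w')" using B by (simp add: ennreal_plus)
    finally have X: "ennreal (norm (a s t - a k l)) \<le> ennreal (B/2^w + B/2^w')" .
    have nn: "0 \<le> B/2^w + B/2^w'" using B by simp
    have "norm (a s t - a k l) \<le> B/2^w + B/2^w'" using X ennreal_le_iff[OF nn] by blast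
    thus ?thesis by (simp add: norm_minus_commute)
  qed
  have s0S: "(s0, t) \<in> S" using s0 unfolding SE by auto
  have close: "norm (a k l - a s0 t) \<le> lam/2" if kl: "(k,l) \<in> S" for k l
  proof -
    have "norm (a k l - a s0 t) \<le> norm (a k l - a s t) + norm (a s0 t - a s t)"
      by (metis norm_triangle_ineq4 diff_diff_eq2 diff_add_cancel add_diff_eq norm_minus_commute
          norm_diff_triangle_ineq)
    also have "\<dots> \<le> 2 * (B/2^w + B/2^w')" using add_mono[OF var[OF kl] var[OF s0S]] by (simp only: mult_2)
    finally show ?thesis using hv by linarith
  qed
  have lamle: "lam \<le> norm (a s0 t)"
  proof (rule hlow)
    show "2^e \<le> s0" using s(1) s0(1) by linarith
    have "real s0 \<le> real s + real W" using s0(2) by simp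
    hence "real s0 \<le> 2^Suc e" using Wle s(2) by linarith
    hence "real s0 \<le> real ((2::nat)^Suc e)" by simp
    thus "s0 \<le> 2^Suc e" by (simp only: of_nat_le_iff)
    show "2^e' \<le> t" by (rule t(1))
    have "real t \<le> 2^Suc e'" using t(2) a0 by linarith
    hence "real t \<le> real ((2::nat)^Suc e')" by simp
    thus "t \<le> 2^Suc e'" by (simp only: of_nat_le_iff)
    show "ev \<longrightarrow> even s0" by (rule s0(3))
  qed
  have main: "real (card S) * (norm (a s0 t) - lam/2) \<le> norm (\<Sum>p\<in>S. case p of (k,l) \<Rightarrow> a k l)"
    by (rule sumlow[OF finS]) (use close in auto)
  have "\<alpha> * \<beta> \<le> real (Suc W) * real (Suc H)"
    by (intro mult_mono) (use a0 floor_card[OF a0(1)] floor_card[OF a0(2)] in \<open>auto simp: W_def H_def\<close>)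
  hence ab: "\<alpha> * \<beta> \<le> real (card S)" unfolding cardS by (simp only: of_nat_mult)
  have "\<alpha>*\<beta>*lam/2 \<le> real (card S) * (lam/2)"
    using ab lam by (simp add: mult_right_mono)
  also have "\<dots> \<le> real (card S) * (norm (a s0 t) - lam/2)"
    using lamle by (intro mult_left_mono) auto
  also have "\<dots> \<le> norm (rect_sum a (real s) (real t) \<alpha> \<beta>)"
    using main unfolding rect_sum_def S_def .
  finally have fin: "\<alpha>*\<beta>*lam/2 \<le> norm (rect_sum a (real s) (real t) \<alpha> \<beta>)" .
  have rs: "(2::real)^e \<le> real s"
    using s(1) by (metis of_nat_le_iff of_nat_numeral of_nat_power)
  have rt: "(2::real)^e' \<le> real t"
    using t(1) by (metis of_nat_le_iff of_nat_numeral of_nat_power)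
  have "rect_in_Q (real s) (real t) \<alpha> \<beta> e e'"
  proof -
    have i1: "{real s..real s+\<alpha>} \<subseteq> {(2::real)^e..2^Suc e}"
      unfolding atLeastatMost_subset_iff using rs s(2) a0 by linarith
    have i2: "{real t..real t+\<beta>} \<subseteq> {(2::real)^e'..2^Suc e'}"
      unfolding atLeastatMost_subset_iff using rt t(2) a0 by linarith
    show ?thesis unfolding rect_in_Q_def using i1 i2 by (rule Sigma_mono)
  qed
  with fin show ?thesis by blast
qed

lemma tz1: "GMc1 C a \<Longrightarrow> tends_to_zero2 a" by (simp add: GMc1_def)
lemma tz2: "GMc2 C a \<Longrightarrow> tends_to_zero2 a" by (simp add: GMc2_def)

lemma GM1_bound:
  assumes "GMc1 C a" "1 \<le> k" "1 \<le> l"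
  shows "GM_lhs a k l \<le> ennreal (max C 0 * norm (a k l))"
proof -
  have "GM_lhs a k l \<le> ennreal (C * norm (a k l))" using assms by (simp add: GMc1_def)
  also have "\<dots> \<le> ennreal (max C 0 * norm (a k l))"
    by (intro ennreal_leI mult_right_mono) auto
  finally show ?thesis .
qed

lemma GM2_bound:
  assumes "GMc2 C a" "1 \<le> k" "1 \<le> l"
  shows "GM_lhs a k l \<le> ennreal (max C 0 * norm (a (2*k) l))"
proof -
  have "GM_lhs a k l \<le> ennreal (C * norm (a (2*k) l))" using assms by (simp add: GMc2_def)
  also have "\<dots> \<le> ennreal (max C 0 * norm (a (2*k) l))"
    by (intro ennreal_leI mult_right_mono) auto
  finally show ?thesis .
qed

lemma hFG:
  assumes "GM_lhs a X Y \<le> ennreal r"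
  shows "(\<Sum>i\<in>{X..<2*X}. FF a Y i) \<le> ennreal r" "(\<Sum>j\<in>{Y..<2*Y}. GG a X j) \<le> ennreal r"
proof -
  have "(\<Sum>i\<in>{X..<2*X}. FF a Y i) \<le> (\<Sum>i\<in>{X..2*X}. FF a Y i)"
    by (intro sum_mono2) auto
  also have "\<dots> \<le> (\<Sum>i\<in>{X..2*X}. FF a Y i) + (\<Sum>j\<in>{Y..2*Y}. GG a X j)"
    by (rule add_increasing2) auto
  also have "\<dots> \<le> ennreal r" using assms by (simp add: GMsplit)
  finally show "(\<Sum>i\<in>{X..<2*X}. FF a Y i) \<le> ennreal r" .
  have "(\<Sum>j\<in>{Y..<2*Y}. GG a X j) \<le> (\<Sum>j\<in>{Y..2*Y}. GG a X j)"
    by (intro sum_mono2) auto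
  also have "\<dots> \<le> (\<Sum>i\<in>{X..2*X}. FF a Y i) + (\<Sum>j\<in>{Y..2*Y}. GG a X j)"
    by (rule add_increasing) auto
  also have "\<dots> \<le> ennreal r" using assms by (simp add: GMsplit)
  finally show "(\<Sum>j\<in>{Y..<2*Y}. GG a X j) \<le> ennreal r" .
qed

lemma partA_low:
  assumes g: "GMc1 C a" and mn: "1 \<le> m" "1 \<le> n"
    and k: "2^(m-1) \<le> k" "k \<le> 2^m" and l: "2^(n-1) \<le> l" "l \<le> 2^n"
  shows "Amax a m n \<le> (1 + max C 0)^2 * norm (a k l)"
proof -
  define C' where "C' = max C 0"
  have C': "C' \<ge> 0" unfolding C'_def by simp
  have tz: "tends_to_zero2 a" using g by (rule tz1)
  obtain k0 l0 where kl0: "2^m \<le> k0" "k0 \<le> 2^Suc m" "2^n \<le> l0" "l0 \<le> 2^Suc n" "norm (a k0 l0) = Amax a m n"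
    using Amax_att by blast
  have p1: "(1::nat) \<le> 2^m" "(1::nat) \<le> 2^n" by simp_all
  have "norm (a (2^m) (2^n) - a k0 l0) \<le> C' * norm (a (2^m) (2^n))"
    by (rule LB[OF tz GM1_bound[OF g p1, folded C'_def]]) (use C' kl0 in auto)
  hence h1: "Amax a m n \<le> (1 + C') * norm (a (2^m) (2^n))"
    using kl0(5) norm_triangle_ineq3[of "a k0 l0" "a (2^m) (2^n)"] by (simp add: norm_minus_commute algebra_simps)
  have "(1::nat) \<le> 2^(m-1)" "(1::nat) \<le> 2^(n-1)" by simp_all
  hence kl1: "1 \<le> k" "1 \<le> l" using k l by linarith+
  have m2: "(2::nat)^m = 2 * 2^(m-1)" using mn by (cases m) auto
  have n2: "(2::nat)^n = 2 * 2^(n-1)" using mn by (cases n) auto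
  have "norm (a k l - a (2^m) (2^n)) \<le> C' * norm (a k l)"
    by (rule LB[OF tz GM1_bound[OF g kl1, folded C'_def]]) (use C' k l m2 n2 kl1 in auto)
  hence h2: "norm (a (2^m) (2^n)) \<le> (1 + C') * norm (a k l)"
    using norm_triangle_ineq3[of "a (2^m) (2^n)" "a k l"] by (simp add: norm_minus_commute algebra_simps)
  have "Amax a m n \<le> (1 + C') * ((1 + C') * norm (a k l))"
    using h1 mult_left_mono[OF h2, of "1 + C'"] C' by linarith
  thus ?thesis unfolding C'_def by (simp add: power2_eq_square mult.assoc)
qed

lemma partB_low:
  assumes g: "GMc2 C a" and n: "1 \<le> n"
    and k: "2^m \<le> k" "k \<le> 2^Suc m" and l: "2^(n-1) \<le> l" "l \<le> 2^n"
  shows "Amax a m n \<le> (1 + 2 * max C 0)^2 * norm (a (2*k) l)"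
proof -
  define C' where "C' = max C 0"
  have C': "C' \<ge> 0" unfolding C'_def by simp
  have tz: "tends_to_zero2 a" using g by (rule tz2)
  obtain k0 l0 where kl0: "2^m \<le> k0" "k0 \<le> 2^Suc m" "2^n \<le> l0" "l0 \<le> 2^Suc n" "norm (a k0 l0) = Amax a m n"
    using Amax_att by blast
  have p1: "(1::nat) \<le> 2^m" "(1::nat) \<le> 2^n" by simp_all
  have G1: "GM_lhs a (2^m) (2^n) \<le> ennreal (C' * norm (a (2*2^m) (2^n)))"
    using GM2_bound[OF g p1] unfolding C'_def .
  have "norm (a (2^m) (2^n) - a k0 l0) \<le> C' * norm (a (2*2^m) (2^n))"
    by (rule LB[OF tz G1]) (use C' kl0 in auto)
  moreover have "norm (a (2^m) (2^n) - a (2*2^m) (2^n)) \<le> C' * norm (a (2*2^m) (2^n))"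
    by (rule LB[OF tz G1]) (use C' in auto)
  ultimately have h1: "Amax a m n \<le> (1 + 2*C') * norm (a (2*2^m) (2^n))"
    using kl0(5) norm_triangle_ineq3[of "a k0 l0" "a (2^m) (2^n)"]
      norm_triangle_ineq3[of "a (2*2^m) (2^n)" "a (2^m) (2^n)"]
    by (simp add: norm_minus_commute algebra_simps)
  have "(1::nat) \<le> 2^m" "(1::nat) \<le> 2^(n-1)" by simp_all
  hence kl1: "1 \<le> k" "1 \<le> l" using k l by linarith+
  have n2: "(2::nat)^n = 2 * 2^(n-1)" using n by (cases n) auto
  have G2: "GM_lhs a k l \<le> ennreal (C' * norm (a (2*k) l))"
    using GM2_bound[OF g kl1] unfolding C'_def .
  have "norm (a k l - a (2*2^m) (2^n)) \<le> C' * norm (a (2*k) l)"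
    by (rule LB[OF tz G2]) (use C' k l n2 kl1 in auto)
  moreover have "norm (a k l - a (2*k) l) \<le> C' * norm (a (2*k) l)"
    by (rule LB[OF tz G2]) (use C' kl1 in auto)
  ultimately have h2: "norm (a (2*2^m) (2^n)) \<le> (1 + 2*C') * norm (a (2*k) l)"
    using norm_triangle_ineq3[of "a (2*2^m) (2^n)" "a k l"]
      norm_triangle_ineq3[of "a (2*k) l" "a k l"]
    by (simp add: norm_minus_commute algebra_simps)
  have "Amax a m n \<le> (1 + 2*C') * ((1 + 2*C') * norm (a (2*k) l))"
    using h1 mult_left_mono[OF h2, of "1 + 2*C'"] C' by linarith
  thus ?thesis unfolding C'_def by (simp add: power2_eq_square mult.assoc)
qed

lemma powr_split: "(2::real) powr (real m - real v) = 2^m / 2^v"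
  by (simp add: powr_diff powr_realpow)

lemma final_ineq:
  fixes A K :: real
  assumes "A > 0" "K > 0"
  shows "1 / (4 * 4^v * K) * 2^(m+n) * A < 2 powr (real m - real v) * 2 powr (real n - real v) * (A / K) / 2"
proof -
  have e: "2 powr (real m - real v) * 2 powr (real n - real v) * (A / K) / 2 = 2^(m+n) * A / (2 * 4^v * K)"
    unfolding powr_split by (simp add: power_add power_mult_distrib[symmetric] field_simps)
  have "2^(m+n) * A / (4 * 4^v * K) < 2^(m+n) * A / (2 * 4^v * K)"
    using assms by (intro divide_strict_left_mono) auto
  thus ?thesis unfolding e by simp
qed

lemma hv_a:
  fixes A B K X :: real
  assumes "A > 0" "K > 0" "X > 0" "B \<ge> 0" "16 * B * K \<le> A * X"
  shows "2 * (B / (X/2) + B / (X/2)) \<le> A / K / 2"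
proof -
  have "2 * (B / (X/2) + B / (X/2)) = 8 * B / X" by (simp add: field_simps)
  also have "\<dots> \<le> A / K / 2" using assms by (simp add: field_simps)
  finally show ?thesis .
qed

lemma hv_b:
  fixes A B K X :: real
  assumes "A > 0" "K > 0" "X > 0" "B \<ge> 0" "16 * B * K \<le> A * X"
  shows "2 * (B / (2*X) + B / (X/2)) \<le> A / K / 2"
proof -
  have "2 * (B / (2*X) + B / (X/2)) \<le> 2 * (B / (X/2) + B / (X/2))"
    using assms by (simp add: field_simps)
  also have "\<dots> \<le> A / K / 2" by (rule hv_a[OF assms])
  finally show ?thesis .
qed

theorem lemma1:
  fixes C T :: real
  assumes "T > 0"
  shows
   "(\<exists>c>0. \<exists>v::nat. v > 0 \<and>
      (\<forall>a. GMc1 C a \<longrightarrow>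
        (\<forall>m n. 1 \<le> m \<longrightarrow> 1 \<le> n \<longrightarrow> Amax a (m-1) (n-1) \<le> T * Amax a m n \<longrightarrow> 0 < Amax a m n \<longrightarrow>
          (\<exists>s1 t1. rect_in_Q s1 t1 (2 powr (real m - real v)) (2 powr (real n - real v)) (m-1) (n-1)
             \<and> norm (rect_sum a s1 t1 (2 powr (real m - real v)) (2 powr (real n - real v)))
                 > c * 2^(m+n) * Amax a m n))))
    \<and>
    (\<exists>c>0. \<exists>v::nat. v > 0 \<and>
      (\<forall>a. GMc2 C a \<longrightarrow>
        (\<forall>m n. 1 \<le> n \<longrightarrow> Amax a (m+1) (n-1) \<le> T * Amax a m n \<longrightarrow> 0 < Amax a m n \<longrightarrow>
          (\<exists>s1 t1. rect_in_Q s1 t1 (2 powr (real m - real v)) (2 powr (real n - real v)) (m+1) (n-1)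
             \<and> norm (rect_sum a s1 t1 (2 powr (real m - real v)) (2 powr (real n - real v)))
                 > c * 2^(m+n) * Amax a m n))))"
proof -
  define C' where "C' = max C 0"
  have C': "C' \<ge> 0" unfolding C'_def by simp
  obtain v0 :: nat where v0: "64 * C' * T * (1+2*C')^2 + 1 < 2^v0"
    using real_arch_pow[of 2 "64 * C' * T * (1+2*C')^2 + 1"] by auto
  define v where "v = v0 + 2"
  have v1: "1 \<le> v" unfolding v_def by simp
  have vv2: "2 \<le> v" unfolding v_def by simp
  have pv: "(2::real)^v = 4 * 2^v0" unfolding v_def by simp
  have X0: "0 \<le> C' * T * (1+2*C')^2" using C' assms by simp
  have big: "16 * (C' * T) * (1 + 2*C')^2 \<le> 2^v" using v0 X0 unfolding pv by simp
  have "(1 + C')^2 \<le> (1 + 2*C')^2" using C' by (intro power_mono) auto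
  hence "16 * (C' * T) * (1 + C')^2 \<le> 16 * (C' * T) * (1 + 2*C')^2"
    using C' assms by (intro mult_left_mono) auto
  hence big1: "16 * (C' * T) * (1 + C')^2 \<le> 2^v" using big by linarith
  have v2a: "(2::real)^(v-1) = 2^v / 2" using v1 by (cases v) auto
  have v2b: "(2::real)^(v+1) = 2 * 2^v" by simp
  show ?thesis
  proof (rule conjI)
    define K where "K = (1 + C')^2"
    have K: "K > 0" unfolding K_def using C' by simp
    show "\<exists>c>0. \<exists>v::nat. v > 0 \<and>
      (\<forall>a. GMc1 C a \<longrightarrow>
        (\<forall>m n. 1 \<le> m \<longrightarrow> 1 \<le> n \<longrightarrow> Amax a (m-1) (n-1) \<le> T * Amax a m n \<longrightarrow> 0 < Amax a m n \<longrightarrow>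
          (\<exists>s1 t1. rect_in_Q s1 t1 (2 powr (real m - real v)) (2 powr (real n - real v)) (m-1) (n-1)
             \<and> norm (rect_sum a s1 t1 (2 powr (real m - real v)) (2 powr (real n - real v)))
                 > c * 2^(m+n) * Amax a m n)))"
    proof (rule exI[of _ "1 / (4 * 4^v * K)"], intro conjI exI[of _ v] allI impI)
      show "0 < 1 / (4 * 4^v * K)" using K by simp
      show "0 < v" using v1 by simp
      fix a m n
      assume g: "GMc1 C a" and m: "1 \<le> m" and n: "1 \<le> n"
        and hA: "Amax a (m-1) (n-1) \<le> T * Amax a m n" and Ap: "0 < Amax a m n"
      define A where "A = Amax a m n"
      have A: "A > 0" using Ap unfolding A_def .
      have tz: "tends_to_zero2 a" using g by (rule tz1)
      have p1: "(1::nat) \<le> 2^(m-1)" "(1::nat) \<le> 2^(n-1)" by simp_all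
      have "norm (a (2^(m-1)) (2^(n-1))) \<le> Amax a (m-1) (n-1)"
        by (rule Amax_ge) auto
      hence "C' * norm (a (2^(m-1)) (2^(n-1))) \<le> C' * T * A"
        using hA C' unfolding A_def by (simp add: mult.assoc mult_left_mono)
      hence GB: "GM_lhs a (2^(m-1)) (2^(n-1)) \<le> ennreal (C' * T * A)"
        using GM1_bound[OF g p1, folded C'_def] by (meson ennreal_leI order_trans)
      have e1: "Suc (m-1) = m" "Suc (n-1) = n" using m n by auto
      have ex: "\<exists>s1 t1. rect_in_Q s1 t1 (2 powr (real m - real v)) (2 powr (real n - real v)) (m-1) (n-1) \<and>
        2 powr (real m - real v) * 2 powr (real n - real v) * (A / K) / 2
           \<le> norm (rect_sum a s1 t1 (2 powr (real m - real v)) (2 powr (real n - real v)))"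
      proof (rule rect_core[OF tz, of "v-1" "v-1" "C'*T*A" "2 powr (real m - real v)" "m-1" "2 powr (real n - real v)" "n-1" "A/K" False], goal_cases)
        case 1 show ?case using vv2 by simp
        case 2 show ?case using vv2 by simp
        case 3 show ?case using C' assms A by simp
        case 4 show ?case using v1 m by (simp add: of_nat_diff)
        case 5 show ?case using v1 n by (simp add: of_nat_diff)
        case 6 show ?case using hFG(1)[OF GB] by (simp only: power_Suc)
        case 7 show ?case using hFG(2)[OF GB] by (simp only: power_Suc)
        case 8 show ?case using A K by simp
        case 9 show ?case unfolding v2a
          by (rule hv_a) (use A K C' assms big1 in \<open>auto simp: K_def mult_right_mono\<close>)
        case (10 k l)
        have "A \<le> K * norm (a k l)"
          unfolding A_def K_def C'_def by (rule partA_low[OF g m n]) (use 10 e1 in auto)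
        then show ?case using K by (simp add: pos_divide_le_eq mult.commute)
      next
        case 11 show ?case by simp
      qed
      then obtain s1 t1 where st: "rect_in_Q s1 t1 (2 powr (real m - real v)) (2 powr (real n - real v)) (m-1) (n-1)"
        "2 powr (real m - real v) * 2 powr (real n - real v) * (A / K) / 2
           \<le> norm (rect_sum a s1 t1 (2 powr (real m - real v)) (2 powr (real n - real v)))" by blast
      have "1 / (4 * 4^v * K) * 2^(m+n) * A < 2 powr (real m - real v) * 2 powr (real n - real v) * (A / K) / 2"
        by (rule final_ineq[OF A K])
      with st show "\<exists>s1 t1. rect_in_Q s1 t1 (2 powr (real m - real v)) (2 powr (real n - real v)) (m-1) (n-1)
             \<and> norm (rect_sum a s1 t1 (2 powr (real m - real v)) (2 powr (real n - real v)))
                 > 1 / (4 * 4^v * K) * 2^(m+n) * Amax a m n"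
        unfolding A_def by fastforce
    qed
  next
    define K where "K = (1 + 2*C')^2"
    have K: "K > 0" unfolding K_def using C' by simp
    show "\<exists>c>0. \<exists>v::nat. v > 0 \<and>
      (\<forall>a. GMc2 C a \<longrightarrow>
        (\<forall>m n. 1 \<le> n \<longrightarrow> Amax a (m+1) (n-1) \<le> T * Amax a m n \<longrightarrow> 0 < Amax a m n \<longrightarrow>
          (\<exists>s1 t1. rect_in_Q s1 t1 (2 powr (real m - real v)) (2 powr (real n - real v)) (m+1) (n-1)
             \<and> norm (rect_sum a s1 t1 (2 powr (real m - real v)) (2 powr (real n - real v)))
                 > c * 2^(m+n) * Amax a m n)))"
    proof (rule exI[of _ "1 / (4 * 4^v * K)"], intro conjI exI[of _ v] allI impI)
      show "0 < 1 / (4 * 4^v * K)" using K by simp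
      show "0 < v" using v1 by simp
      fix a m n
      assume g: "GMc2 C a" and n: "1 \<le> n"
        and hA: "Amax a (m+1) (n-1) \<le> T * Amax a m n" and Ap: "0 < Amax a m n"
      define A where "A = Amax a m n"
      have A: "A > 0" using Ap unfolding A_def .
      have tz: "tends_to_zero2 a" using g by (rule tz2)
      have p1: "(1::nat) \<le> 2^(m+1)" "(1::nat) \<le> 2^(n-1)" by simp_all
      have "norm (a (2*2^(m+1)) (2^(n-1))) \<le> Amax a (m+1) (n-1)"
        by (rule Amax_ge) auto
      hence "C' * norm (a (2*2^(m+1)) (2^(n-1))) \<le> C' * T * A"
        using hA C' unfolding A_def by (simp add: mult.assoc mult_left_mono)
      hence GB: "GM_lhs a (2^(m+1)) (2^(n-1)) \<le> ennreal (C' * T * A)"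
        using GM2_bound[OF g p1, folded C'_def] by (meson ennreal_leI order_trans)
      have e1: "Suc (n-1) = n" using n by auto
      have ex: "\<exists>s1 t1. rect_in_Q s1 t1 (2 powr (real m - real v)) (2 powr (real n - real v)) (m+1) (n-1) \<and>
        2 powr (real m - real v) * 2 powr (real n - real v) * (A / K) / 2
           \<le> norm (rect_sum a s1 t1 (2 powr (real m - real v)) (2 powr (real n - real v)))"
      proof (rule rect_core[OF tz, of "v+1" "v-1" "C'*T*A" "2 powr (real m - real v)" "m+1" "2 powr (real n - real v)" "n-1" "A/K" True], goal_cases)
        case 1 show ?case by simp
        case 2 show ?case using vv2 by simp
        case 3 show ?case using C' assms A by simp
        case 4 show ?case by simp
        case 5 show ?case using v1 n by (simp add: of_nat_diff)
        case 6 show ?case using hFG(1)[OF GB] by (simp only: power_Suc)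
        case 7 show ?case using hFG(2)[OF GB] by (simp only: power_Suc)
        case 8 show ?case using A K by simp
        case 9 show ?case unfolding v2a v2b
          by (rule hv_b) (use A K C' assms big in \<open>auto simp: K_def mult_right_mono\<close>)
        case (10 k l)
        then obtain k' where k': "k = 2 * k'" by (auto elim: evenE)
        have "A \<le> K * norm (a (2*k') l)"
          unfolding A_def K_def C'_def by (rule partB_low[OF g n]) (use 10 e1 k' in auto)
        then show ?case using K k' by (simp add: pos_divide_le_eq mult.commute)
      next
        case 11 show ?case by simp
      qed
      then obtain s1 t1 where st: "rect_in_Q s1 t1 (2 powr (real m - real v)) (2 powr (real n - real v)) (m+1) (n-1)"
        "2 powr (real m - real v) * 2 powr (real n - real v) * (A / K) / 2
           \<le> norm (rect_sum a s1 t1 (2 powr (real m - real v)) (2 powr (real n - real v)))" by blast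
      have "1 / (4 * 4^v * K) * 2^(m+n) * A < 2 powr (real m - real v) * 2 powr (real n - real v) * (A / K) / 2"
        by (rule final_ineq[OF A K])
      with st show "\<exists>s1 t1. rect_in_Q s1 t1 (2 powr (real m - real v)) (2 powr (real n - real v)) (m+1) (n-1)
             \<and> norm (rect_sum a s1 t1 (2 powr (real m - real v)) (2 powr (real n - real v)))
                 > 1 / (4 * 4^v * K) * 2^(m+n) * Amax a m n"
        unfolding A_def by fastforce
    qed
  qed
qed

end
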